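(* Let $(X,Y)\sim P_{X,Y}$ be random variables in $\mathcal{X}\times\mathcal{Y}$, where $|\mathcal{X}|=2$ and $\mathcal{Y}$ is finite. For any positive integer $L$, the greedy-merge algorithm finds a quantizer $f:\mathcal{Y}\to\{1,\dots,L\}$ such that \[ I(X;Y)-I(X;f(Y))\leq\frac{64}{L^2}. \]
   Context: Logarithms are natural. The greedy-merge algorithm: repeatedly merge into a single new symbol the two output symbols $i\neq j$ whose merging (applying the map sending $i,j$ to a new common symbol and fixing all others) decreases the mutual information with $X$ the least, until at most $L$ symbols remain; the quantizer $f$ is the composition of all merges. *)

theory Defs
  imports Complex_Main
begin

definition is_joint_pmf :: "(bool \<Rightarrow> 'y::finite \<Rightarrow> real) \<Rightarrow> bool" where
  "is_joint_pmf p \<longleftrightarrow> (\<forall>x y. 0 \<le> p x y) \<and> (\<Sum>x\<in>UNIV. \<Sum>y\<in>UNIV. p x y) = 1"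

definition qjoint :: "(bool \<Rightarrow> 'y::finite \<Rightarrow> real) \<Rightarrow> ('y \<Rightarrow> 'z) \<Rightarrow> bool \<Rightarrow> 'z \<Rightarrow> real" where
  "qjoint p q x z = (\<Sum>y\<in>{y. q y = z}. p x y)"

definition marg_X :: "(bool \<Rightarrow> 'y::finite \<Rightarrow> real) \<Rightarrow> bool \<Rightarrow> real" where
  "marg_X p x = (\<Sum>y\<in>UNIV. p x y)"

text \<open>Mutual information I(X; q(Y)) in nats, with 0 ln 0 = 0
  (note ln 0 = 0 in Isabelle, and terms with zero joint mass vanish).\<close>
definition mutual_info :: "(bool \<Rightarrow> 'y::finite \<Rightarrow> real) \<Rightarrow> ('y \<Rightarrow> 'z) \<Rightarrow> real" where
  "mutual_info p q =
     (\<Sum>x\<in>UNIV. \<Sum>z\<in>range q.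
        qjoint p q x z * ln (qjoint p q x z /
          (marg_X p x * (\<Sum>x'\<in>UNIV. qjoint p q x' z))))"

text \<open>Output symbols are represented as the blocks (sets of y) they
  collect; merging symbols i and j replaces both by the new symbol i \<union> j
  (which is fresh, as the blocks are disjoint) and fixes all others.\<close>
definition merge :: "('y \<Rightarrow> 'y set) \<Rightarrow> 'y set \<Rightarrow> 'y set \<Rightarrow> ('y \<Rightarrow> 'y set)" where
  "merge g i j = (\<lambda>y. if g y = i \<or> g y = j then i \<union> j else g y)"

definition greedy_step :: "(bool \<Rightarrow> 'y::finite \<Rightarrow> real) \<Rightarrow> ('y \<Rightarrow> 'y set) \<Rightarrow> ('y \<Rightarrow> 'y set) \<Rightarrow> bool" where
  "greedy_step p g g' \<longleftrightarrow>
     (\<exists>i j. i \<in> range g \<and> j \<in> range g \<and> i \<noteq> j \<and> g' = merge g i j \<and>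
        (\<forall>i' j'. i' \<in> range g \<and> j' \<in> range g \<and> i' \<noteq> j' \<longrightarrow>
           mutual_info p g - mutual_info p (merge g i j)
             \<le> mutual_info p g - mutual_info p (merge g i' j')))"

inductive greedy_run :: "(bool \<Rightarrow> 'y::finite \<Rightarrow> real) \<Rightarrow> nat \<Rightarrow> ('y \<Rightarrow> 'y set) \<Rightarrow> ('y \<Rightarrow> 'y set) \<Rightarrow> bool"
  for p L where
  stop: "card (range g) \<le> L \<Longrightarrow> greedy_run p L g g"
| step: "card (range g) > L \<Longrightarrow> greedy_step p g g' \<Longrightarrow> greedy_run p L g' h \<Longrightarrow> greedy_run p L g h"

end

theory Submission
  imports Defs
begin


definition phi :: "real \<Rightarrow> real" where "phi t = t * ln t"
definition Tf :: "real \<Rightarrow> real \<Rightarrow> real" where "Tf u v = phi u + phi v - phi (u + v)"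
definition ang :: "real \<Rightarrow> real \<Rightarrow> real" where "ang u v = arccos (sqrt (u / (u + v)))"

lemma coord_bound:
  fixes a b A B :: real
  assumes a: "a \<ge> 0" and b: "b \<ge> 0" and A: "A > 0" and B: "B > 0"
  shows "a*ln a + b*ln b - (a+b)*ln(a+b) - a*ln A - b*ln B + (a+b)*ln(A+B)
         \<le> (B*a - A*b)^2/(A*B*(a+b))"
proof (cases "a = 0")
  case True
  show ?thesis
  proof (cases "b = 0")
    case True with \<open>a = 0\<close> show ?thesis by simp
  next
    case False
    then have bp: "b > 0" using b by simp
    have "ln ((A+B)/B) \<le> (A+B)/B - 1" using A B by (intro ln_le_minus_one) simp
    then have "b * ln ((A+B)/B) \<le> b * ((A+B)/B - 1)" using b mult_left_mono by blast
    moreover have "b * ((A+B)/B - 1) = (B*a - A*b)^2/(A*B*(a+b))"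
      using True A B bp by (simp add: field_simps power2_eq_square)
    moreover have "b * ln ((A+B)/B) = a*ln a + b*ln b - (a+b)*ln(a+b) - a*ln A - b*ln B + (a+b)*ln(A+B)"
      using True A B bp by (simp add: ln_div algebra_simps)
    ultimately show ?thesis by linarith
  qed
next
  case False
  then have ap: "a > 0" using a by simp
  show ?thesis
  proof (cases "b = 0")
    case True
    have "ln ((A+B)/A) \<le> (A+B)/A - 1" using A B by (intro ln_le_minus_one) simp
    then have "a * ln ((A+B)/A) \<le> a * ((A+B)/A - 1)" using a mult_left_mono by blast
    moreover have "a * ((A+B)/A - 1) = (B*a - A*b)^2/(A*B*(a+b))"
      using True A B ap by (simp add: field_simps power2_eq_square)
    moreover have "a * ln ((A+B)/A) = a*ln a + b*ln b - (a+b)*ln(a+b) - a*ln A - b*ln B + (a+b)*ln(A+B)"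
      using True A B ap by (simp add: ln_div algebra_simps)
    ultimately show ?thesis by linarith
  next
    case False
    then have bp: "b > 0" using b by simp
    define u where "u = a*(A+B)/(A*(a+b))"
    define v where "v = b*(A+B)/(B*(a+b))"
    have up: "u > 0" and vp: "v > 0" using ap bp A B by (simp_all add: u_def v_def)
    have lu: "ln u = ln a + ln (A+B) - ln A - ln (a+b)"
      using ap bp A B by (simp add: u_def ln_div ln_mult)
    have lv: "ln v = ln b + ln (A+B) - ln B - ln (a+b)"
      using ap bp A B by (simp add: v_def ln_div ln_mult)
    have "a * ln u \<le> a * (u - 1)" using ln_le_minus_one[OF up] a mult_left_mono by blast
    moreover have "b * ln v \<le> b * (v - 1)" using ln_le_minus_one[OF vp] b mult_left_mono by blast
    moreover have "a * (u - 1) + b * (v - 1) = (B*a - A*b)^2/(A*B*(a+b))"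
    proof -
      have d: "A*B*(a+b) > 0" using ap bp A B by simp
      have u1: "u - 1 = (B*a - A*b)/(A*(a+b))" unfolding u_def using ap bp A B
        by (simp add: divide_simps) (simp add: algebra_simps)
      have v1: "v - 1 = -(B*a - A*b)/(B*(a+b))" unfolding v_def using ap bp A B
        by (simp add: divide_simps) (simp add: algebra_simps)
      have "a * (u - 1) + b * (v - 1) = (B*a - A*b) * (a/(A*(a+b)) - b/(B*(a+b)))"
        unfolding u1 v1 by (simp add: algebra_simps add_divide_distrib[symmetric])
      also have "a/(A*(a+b)) - b/(B*(a+b)) = (B*a - A*b)/(A*B*(a+b))"
        using ap bp A B by (simp add: divide_simps)
      finally show ?thesis by (simp add: power2_eq_square)
    qed
    moreover have "a * ln u + b * ln v = a*ln a + b*ln b - (a+b)*ln(a+b) - a*ln A - b*ln B + (a+b)*ln(A+B)"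
      unfolding lu lv by (simp add: algebra_simps)
    ultimately show ?thesis by linarith
  qed
qed

lemma hell_aux:
  fixes x y A B t :: real
  assumes x: "x \<ge> 0" and y: "y \<ge> 0" and A: "A > 0" and B: "B > 0" and At: "A \<le> t" and Bt: "B \<le> t"
  shows "(B*(A*x^2) - A*(B*y^2))^2/(A*B*(A*x^2+B*y^2)) \<le> 2*t*(x-y)^2"
proof (cases "A*x^2+B*y^2 = 0")
  case True then show ?thesis using A At by simp
next
  case False
  then have d: "A*B*(A*x^2+B*y^2) > 0" using A B
    by (metis add_nonneg_nonneg less_eq_real_def mult_pos_pos zero_le_mult_iff zero_le_power2)
  have key: "A*B*(x+y)^2 \<le> 2*t*(A*x^2+B*y^2)"
  proof -
    have s2: "(x+y)^2 \<le> 2*(x^2+y^2)"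
    proof -
      have "0 \<le> (x-y)^2" by simp
      then show ?thesis by (simp add: power2_eq_square algebra_simps)
    qed
    have "A*B*(x+y)^2 \<le> A*B*(2*(x^2+y^2))"
      using A B s2 by (intro mult_left_mono) auto
    also have "\<dots> = 2*(A*x^2*B + B*y^2*A)" by (simp add: algebra_simps)
    also have "\<dots> \<le> 2*(A*x^2*t + B*y^2*t)"
      using A B At Bt by (intro mult_left_mono add_mono) (auto intro!: mult_left_mono)
    finally show ?thesis by (simp add: algebra_simps)
  qed
  have "(B*(A*x^2) - A*(B*y^2))^2 = A*B*(x-y)^2 * (A*B*(x+y)^2)"
    by (simp add: power2_eq_square algebra_simps)
  also have "\<dots> \<le> A*B*(x-y)^2 * (2*t*(A*x^2+B*y^2))"
    using key A B by (intro mult_left_mono) auto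
  also have "\<dots> = 2*t*(x-y)^2 * (A*B*(A*x^2+B*y^2))" by (simp add: algebra_simps)
  finally show ?thesis using d by (simp add: divide_le_eq)
qed

lemma chord:
  fixes x y :: real
  shows "(cos x - cos y)^2 + (sin x - sin y)^2 \<le> (x - y)^2"
proof -
  have e: "(cos x - cos y)^2 + (sin x - sin y)^2 = 2 - 2 * cos (x - y)"
    using sin_cos_squared_add[of x] sin_cos_squared_add[of y]
    by (simp add: cos_diff power2_eq_square algebra_simps)
  have "x - y = 2 * ((x - y)/2)" by simp
  then have "cos (x - y) = cos (2 * ((x - y)/2))" by (rule arg_cong)
  also have "\<dots> = 1 - 2 * sin ((x-y)/2) ^ 2" by (rule cos_double_sin)
  finally have c: "cos (x - y) = 1 - 2 * sin ((x-y)/2) ^ 2" .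
  have "sin ((x-y)/2) ^ 2 \<le> ((x-y)/2)^2"
    using abs_sin_x_le_abs_x[of "(x-y)/2"]
    by (metis abs_ge_zero power2_abs power_mono)
  then show ?thesis unfolding e c by (simp add: power_divide)
qed

lemma hell:
  fixes q r A B t :: real
  assumes q: "q \<ge> 0" and r: "r \<ge> 0" and A: "A > 0" and B: "B > 0" and At: "A \<le> t" and Bt: "B \<le> t"
  shows "(B*q - A*r)^2/(A*B*(q+r)) \<le> 2*t*(sqrt (q/A) - sqrt (r/B))^2"
proof -
  have e1: "A * (sqrt (q/A))^2 = q" using q A by simp
  have e2: "B * (sqrt (r/B))^2 = r" using r B by simp
  show ?thesis using hell_aux[OF _ _ A B At Bt, of "sqrt (q/A)" "sqrt (r/B)"] q r A B
    unfolding e1 e2 by simp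
qed

lemma ang_cos_sin:
  fixes u v :: real
  assumes "u \<ge> 0" "v \<ge> 0" "u + v > 0"
  shows "cos (ang u v) = sqrt (u/(u+v))" "sin (ang u v) = sqrt (v/(u+v))"
    "0 \<le> ang u v" "ang u v \<le> pi/2"
proof -
  have h0: "0 \<le> sqrt (u/(u+v))" using assms by simp
  have h1: "sqrt (u/(u+v)) \<le> 1" using assms by simp
  have h0': "-1 \<le> sqrt (u/(u+v))" using h0 by linarith
  show "cos (ang u v) = sqrt (u/(u+v))" unfolding ang_def by (rule cos_arccos[OF h0' h1])
  have "sin (ang u v) = sqrt (1 - (sqrt (u/(u+v)))^2)" unfolding ang_def
    by (rule sin_arccos[OF h0' h1])
  also have "(sqrt (u/(u+v)))^2 = u/(u+v)" using assms by simp
  also have "1 - u/(u+v) = v/(u+v)" using assms by (simp add: field_simps)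
  finally show "sin (ang u v) = sqrt (v/(u+v))" .
  show "0 \<le> ang u v" unfolding ang_def by (rule arccos_lbound[OF h0' h1])
  show "ang u v \<le> pi/2" unfolding ang_def by (rule arccos_le_pi2[OF h0 h1])
qed

lemma Tf00 [simp]: "Tf 0 0 = 0" by (simp add: Tf_def phi_def)

lemma merge_loss:
  fixes q0 q1 r0 r1 t :: real
  assumes q0: "q0 \<ge> 0" and q1: "q1 \<ge> 0" and r0: "r0 \<ge> 0" and r1: "r1 \<ge> 0"
    and At: "q0 + q1 \<le> t" and Bt: "r0 + r1 \<le> t"
  shows "Tf q0 q1 + Tf r0 r1 - Tf (q0+r0) (q1+r1) \<le> 2*t*(ang q0 q1 - ang r0 r1)^2"
proof (cases "q0 + q1 = 0 \<or> r0 + r1 = 0")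
  case True
  have t: "t \<ge> 0" using At q0 q1 by linarith
  from True show ?thesis
  proof
    assume "q0 + q1 = 0" then have "q0 = 0" "q1 = 0" using q0 q1 by auto
    then show ?thesis using t by simp
  next
    assume "r0 + r1 = 0" then have "r0 = 0" "r1 = 0" using r0 r1 by auto
    then show ?thesis using t by simp
  qed
next
  case False
  define A where "A = q0 + q1"
  define B where "B = r0 + r1"
  have A: "A > 0" using False q0 q1 unfolding A_def by auto
  have B: "B > 0" using False r0 r1 unfolding B_def by auto
  have At': "A \<le> t" and Bt': "B \<le> t" using At Bt by (simp_all add: A_def B_def)
  have split: "Tf q0 q1 + Tf r0 r1 - Tf (q0+r0) (q1+r1) =
     (q0*ln q0 + r0*ln r0 - (q0+r0)*ln(q0+r0) - q0*ln A - r0*ln B + (q0+r0)*ln(A+B)) +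
     (q1*ln q1 + r1*ln r1 - (q1+r1)*ln(q1+r1) - q1*ln A - r1*ln B + (q1+r1)*ln(A+B))"
  proof -
    show ?thesis unfolding Tf_def phi_def A_def B_def
      by (simp add: algebra_simps)
  qed
  have c0: "q0*ln q0 + r0*ln r0 - (q0+r0)*ln(q0+r0) - q0*ln A - r0*ln B + (q0+r0)*ln(A+B)
      \<le> 2*t*(sqrt (q0/A) - sqrt (r0/B))^2"
    using coord_bound[OF q0 r0 A B] hell[OF q0 r0 A B At' Bt'] by linarith
  have c1: "q1*ln q1 + r1*ln r1 - (q1+r1)*ln(q1+r1) - q1*ln A - r1*ln B + (q1+r1)*ln(A+B)
      \<le> 2*t*(sqrt (q1/A) - sqrt (r1/B))^2"
    using coord_bound[OF q1 r1 A B] hell[OF q1 r1 A B At' Bt'] by linarith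
  have cs: "(sqrt (q0/A) - sqrt (r0/B))^2 + (sqrt (q1/A) - sqrt (r1/B))^2 =
      (cos (ang q0 q1) - cos (ang r0 r1))^2 + (sin (ang q0 q1) - sin (ang r0 r1))^2"
    using ang_cos_sin[OF q0 q1] ang_cos_sin[OF r0 r1] A B unfolding A_def B_def by simp
  have t: "t \<ge> 0" using A At' by linarith
  have "Tf q0 q1 + Tf r0 r1 - Tf (q0+r0) (q1+r1) \<le>
     2*t*((sqrt (q0/A) - sqrt (r0/B))^2 + (sqrt (q1/A) - sqrt (r1/B))^2)"
    unfolding split using c0 c1 by (simp add: algebra_simps)
  also have "\<dots> \<le> 2*t*(ang q0 q1 - ang r0 r1)^2"
    unfolding cs using chord t by (intro mult_left_mono) auto
  finally show ?thesis .
qed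



lemma pigeon:
  fixes S :: "'a set" and th :: "'a \<Rightarrow> real" and c :: real and m :: nat
  assumes fin: "finite S" and card: "card S \<ge> m+1" and m: "m \<ge> 1" and c: "c > 0"
    and rng: "\<forall>z\<in>S. 0 \<le> th z \<and> th z \<le> c"
  shows "\<exists>i\<in>S. \<exists>j\<in>S. i \<noteq> j \<and> \<bar>th i - th j\<bar> \<le> c/m"
proof -
  define w where "w = c / m"
  have w: "w > 0" using c m by (simp add: w_def)
  have cw: "c = real m * w" using m by (simp add: w_def)
  define idx where "idx z = min (nat \<lfloor>th z / w\<rfloor>) (m-1)" for z
  have bnd: "real (idx z) * w \<le> th z \<and> th z \<le> (real (idx z) + 1) * w" if z: "z \<in> S" for z
  proof (cases "nat \<lfloor>th z / w\<rfloor> \<le> m-1")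
    case True
    then have i: "idx z = nat \<lfloor>th z / w\<rfloor>" by (simp add: idx_def)
    have nn: "th z / w \<ge> 0" using rng z w by simp
    then have ri: "real (idx z) = of_int \<lfloor>th z / w\<rfloor>" unfolding i by simp
    have "of_int \<lfloor>th z / w\<rfloor> \<le> th z / w" by (rule of_int_floor_le)
    then have f1: "of_int \<lfloor>th z / w\<rfloor> * w \<le> th z" using w by (simp add: le_divide_eq)
    have "th z / w < of_int \<lfloor>th z / w\<rfloor> + 1" by (rule real_of_int_floor_add_one_gt)
    then have f2: "th z < (of_int \<lfloor>th z / w\<rfloor> + 1) * w" using pos_divide_less_eq[OF w] by blast
    show ?thesis unfolding ri using f1 f2 by simp
  next
    case False
    then have i: "idx z = m - 1" by (simp add: idx_def)
    from False have "\<lfloor>th z / w\<rfloor> \<ge> int m" by linarith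
    then have "th z / w \<ge> real m" by (metis floor_le_iff le_floor_iff not_less of_int_of_nat_eq)
    then have "th z \<ge> c" using w cw by (simp add: field_simps)
    then have "th z = c" using rng z by force
    then show ?thesis unfolding i cw using m w by (simp add: of_nat_diff algebra_simps)
  qed
  have "idx ` S \<subseteq> {..<m}" using m by (auto simp: idx_def)
  then have "card (idx ` S) \<le> m" by (metis card_lessThan card_mono finite_lessThan)
  then have "\<not> inj_on idx S" using card by (intro pigeonhole) simp
  then obtain i j where ij: "i \<in> S" "j \<in> S" "i \<noteq> j" "idx i = idx j"
    unfolding inj_on_def by blast
  have "\<bar>th i - th j\<bar> \<le> w" using bnd[OF ij(1)] bnd[OF ij(2)] ij(4) by (simp add: algebra_simps abs_le_iff)
  then show ?thesis using ij w_def by blast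
qed

lemma step_arith:
  fixes M :: nat
  assumes "M \<ge> 2"
  shows "64 / (real M * (real M - 1)^2) \<le> 64 / (real M - 1)^2 - 64 / (real M)^2"
proof -
  define x where "x = real M"
  have a: "x \<ge> 2" using assms by (simp add: x_def)
  have p: "(x-1)^2 > 0" "x^2 > 0" "x > 0" using a by auto
  have e: "64 / (x - 1)^2 - 64 / x^2 - 64 / (x * (x - 1)^2) = 64 * (x - 1) / (x^2 * (x - 1)^2)"
    using p by (simp add: divide_simps) (simp add: algebra_simps power2_eq_square)
  have "64 * (x - 1) / (x^2 * (x - 1)^2) \<ge> 0" using a by simp
  then show ?thesis using e unfolding x_def by linarith
qed



definition C0 :: "(bool \<Rightarrow> 'y::finite \<Rightarrow> real) \<Rightarrow> real" where
  "C0 p = (\<Sum>x\<in>UNIV. phi (marg_X p x))"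

lemma qjoint_nonneg: "is_joint_pmf p \<Longrightarrow> qjoint p g x z \<ge> 0"
  unfolding qjoint_def is_joint_pmf_def by (simp add: sum_nonneg)

lemma qjoint_le_marg: "is_joint_pmf p \<Longrightarrow> qjoint p g x z \<le> marg_X p x"
  unfolding qjoint_def marg_X_def is_joint_pmf_def by (intro sum_mono2) auto

lemma qjoint_sum: "(\<Sum>z\<in>range g. qjoint p g x z) = marg_X p x"
proof -
  have "marg_X p x = (\<Sum>z\<in>g ` UNIV. \<Sum>y\<in>{y. y \<in> UNIV \<and> g y = z}. p x y)"
    unfolding marg_X_def by (rule sum.image_gen) simp
  then show ?thesis unfolding qjoint_def by simp
qed

lemma term_eq:
  fixes q m Q :: real
  assumes "q \<ge> 0" "q \<le> m" "q \<le> Q"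
  shows "q * ln (q / (m * Q)) = phi q - q * ln m - q * ln Q"
proof (cases "q = 0")
  case True then show ?thesis by (simp add: phi_def)
next
  case False
  then have "q > 0" "m > 0" "Q > 0" using assms by auto
  then show ?thesis by (simp add: phi_def ln_div ln_mult algebra_simps)
qed

lemma MI_formula:
  assumes p: "is_joint_pmf p"
  shows "mutual_info p g = (\<Sum>z\<in>range g. Tf (qjoint p g True z) (qjoint p g False z)) - C0 p"
proof -
  define q where "q x z = qjoint p g x z" for x z
  define Q where "Q z = (\<Sum>x'\<in>UNIV. qjoint p g x' z)" for z
  have qn: "q x z \<ge> 0" for x z unfolding q_def using qjoint_nonneg[OF p] .
  have qQ: "q x z \<le> Q z" for x z
    unfolding Q_def q_def[symmetric] using qn[of True z] qn[of False z] by (cases x) (auto simp: UNIV_bool)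
  have t: "qjoint p g x z * ln (qjoint p g x z / (marg_X p x * (\<Sum>x'\<in>UNIV. qjoint p g x' z)))
     = phi (q x z) - q x z * ln (marg_X p x) - q x z * ln (Q z)" for x z
    using term_eq[OF qjoint_nonneg[OF p] qjoint_le_marg[OF p] qQ[unfolded q_def Q_def]]
    unfolding q_def Q_def .
  have qs: "(\<Sum>z\<in>range g. q x z) = marg_X p x" for x unfolding q_def by (rule qjoint_sum)
  have QQ: "Q z = q False z + q True z" for z unfolding Q_def q_def by (simp add: UNIV_bool)
  have "mutual_info p g = (\<Sum>x\<in>UNIV. \<Sum>z\<in>range g. phi (q x z) - q x z * ln (marg_X p x) - q x z * ln (Q z))"
    unfolding mutual_info_def t ..
  also have "\<dots> = (\<Sum>z\<in>range g. phi (q False z) + phi (q True z) - Q z * ln (Q z))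
       - (marg_X p False * ln (marg_X p False) + marg_X p True * ln (marg_X p True))"
    by (simp add: UNIV_bool sum_subtractf sum.distrib sum_distrib_right[symmetric] qs QQ algebra_simps)
  also have "\<dots> = (\<Sum>z\<in>range g. Tf (qjoint p g True z) (qjoint p g False z)) - C0 p"
    unfolding C0_def Tf_def by (simp add: UNIV_bool QQ q_def phi_def algebra_simps)
  finally show ?thesis .
qed

definition pinv :: "('y \<Rightarrow> 'y set) \<Rightarrow> bool" where
  "pinv g \<longleftrightarrow> (\<forall>y. y \<in> g y) \<and> (\<forall>y y'. y \<in> g y' \<longrightarrow> g y' = g y)"

lemma pinv_single: "pinv (\<lambda>y. {y})" unfolding pinv_def by auto

lemma pinv_merge:
  assumes "pinv g" "i \<in> range g" "j \<in> range g"
  shows "pinv (merge g i j)"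
  using assms unfolding pinv_def merge_def by (smt (verit) UnCI UnE rangeE)

lemma fresh:
  assumes "pinv g" "i \<in> range g" "k \<in> range g" "k = i \<union> j"
  shows "k = i"
proof -
  obtain yi where yi: "i = g yi" using assms by auto
  obtain y where y: "k = g y" using assms by auto
  have "yi \<in> g yi" using assms(1) unfolding pinv_def by auto
  then have "yi \<in> g y" using yi y assms(4) by auto
  then have "g y = g yi" using assms(1) unfolding pinv_def by auto
  then show ?thesis using yi y by simp
qed

lemma range_merge:
  assumes "i \<in> range g" "j \<in> range g"
  shows "range (merge g i j) = insert (i \<union> j) (range g - {i, j})"
  using assms unfolding merge_def by (auto simp: image_iff)

lemma new_notin:
  assumes "pinv g" "i \<in> range g" "j \<in> range g"
  shows "i \<union> j \<notin> range g - {i, j}"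
  using fresh[OF assms(1,2)] by auto

lemma card_merge:
  fixes g :: "'y::finite \<Rightarrow> 'y set"
  assumes "pinv g" "i \<in> range g" "j \<in> range g" "i \<noteq> j"
  shows "card (range (merge g i j)) = card (range g) - 1"
proof -
  have "card (range g - {i, j}) = card (range g) - 2"
    using assms by (subst card_Diff_subset) auto
  moreover have "card (range g) \<ge> 2"
  proof -
    have "card {i, j} \<le> card (range g)" using assms by (intro card_mono) auto
    then show ?thesis using assms by simp
  qed
  ultimately show ?thesis unfolding range_merge[OF assms(2,3)]
    using new_notin[OF assms(1-3)] by simp
qed

lemma qjoint_merge_new:
  assumes "pinv g" "i \<in> range g" "j \<in> range g" "i \<noteq> j"
  shows "qjoint p (merge g i j) x (i \<union> j) = qjoint p g x i + qjoint p g x j"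
proof -
  have "{y. merge g i j y = i \<union> j} = {y. g y = i} \<union> {y. g y = j}"
    using new_notin[OF assms(1-3)] unfolding merge_def by auto
  then show ?thesis unfolding qjoint_def using assms(4)
    by (simp add: sum.union_disjoint disjoint_iff)
qed

lemma qjoint_merge_old:
  assumes "pinv g" "i \<in> range g" "j \<in> range g" "k \<in> range g - {i, j}"
  shows "qjoint p (merge g i j) x k = qjoint p g x k"
proof -
  have "k \<noteq> i \<union> j" using new_notin[OF assms(1-3)] assms(4) by auto
  then have "{y. merge g i j y = k} = {y. g y = k}"
    using assms(4) unfolding merge_def by auto
  then show ?thesis unfolding qjoint_def by simp
qed

lemma MI_merge:
  assumes p: "is_joint_pmf p" and g: "pinv g" "i \<in> range g" "j \<in> range g" "i \<noteq> j"
  shows "mutual_info p g - mutual_info p (merge g i j) =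
    Tf (qjoint p g True i) (qjoint p g False i) + Tf (qjoint p g True j) (qjoint p g False j)
    - Tf (qjoint p g True i + qjoint p g True j) (qjoint p g False i + qjoint p g False j)"
proof -
  define F where "F z = Tf (qjoint p g True z) (qjoint p g False z)" for z
  define R where "R = range g - {i, j}"
  have s1: "(\<Sum>z\<in>range g. F z) = F i + F j + (\<Sum>z\<in>R. F z)"
  proof -
    have "(\<Sum>z\<in>range g. F z) = F i + (\<Sum>z\<in>range g - {i}. F z)"
      using g by (intro sum.remove) auto
    also have "(\<Sum>z\<in>range g - {i}. F z) = F j + (\<Sum>z\<in>range g - {i} - {j}. F z)"
      using g by (intro sum.remove) auto
    also have "range g - {i} - {j} = R" unfolding R_def by auto
    finally show ?thesis by simp
  qed
  have s2: "(\<Sum>z\<in>range (merge g i j). Tf (qjoint p (merge g i j) True z) (qjoint p (merge g i j) False z))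
     = Tf (qjoint p g True i + qjoint p g True j) (qjoint p g False i + qjoint p g False j) + (\<Sum>z\<in>R. F z)"
    unfolding range_merge[OF g(2,3)] R_def[symmetric]
    using new_notin[OF g(1-3)]
    by (simp add: R_def qjoint_merge_new[OF g] qjoint_merge_old[OF g(1-3)] F_def)
  show ?thesis unfolding MI_formula[OF p] s2 using s1 unfolding F_def by simp
qed

lemma relabel:
  assumes inj: "inj_on s (range g)"
  shows "mutual_info p (s \<circ> g) = mutual_info p g"
proof -
  have r: "range (s \<circ> g) = s ` range g" by (simp add: image_comp)
  have q: "qjoint p (s \<circ> g) x (s z) = qjoint p g x z" if "z \<in> range g" for x z
  proof -
    have "{y. s (g y) = s z} = {y. g y = z}" using inj that by (auto dest: inj_onD)
    then show ?thesis unfolding qjoint_def by simp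
  qed
  show ?thesis unfolding mutual_info_def r
    by (simp add: sum.reindex[OF inj] q)
qed



lemma ang_range:
  fixes u v :: real
  assumes "u \<ge> 0" "v \<ge> 0"
  shows "0 \<le> ang u v \<and> ang u v \<le> pi/2"
proof -
  have h1: "u/(u+v) \<le> 1" using assms by (cases "u+v = 0") (auto simp: divide_le_eq)
  have h0: "0 \<le> sqrt (u/(u+v))" using assms by simp
  have h1': "sqrt (u/(u+v)) \<le> 1" using h1 by simp
  have h0': "-1 \<le> sqrt (u/(u+v))" using h0 by linarith
  show ?thesis unfolding ang_def using arccos_lbound[OF h0' h1'] arccos_le_pi2[OF h0 h1'] by simp
qed

lemma good_pair:
  fixes p :: "bool \<Rightarrow> 'y::finite \<Rightarrow> real" and g :: "'y \<Rightarrow> 'z"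
  assumes p: "is_joint_pmf p" and M: "card (range g) = M" "M \<ge> 2"
  shows "\<exists>i\<in>range g. \<exists>j\<in>range g. i \<noteq> j \<and>
    Tf (qjoint p g True i) (qjoint p g False i) + Tf (qjoint p g True j) (qjoint p g False j)
    - Tf (qjoint p g True i + qjoint p g True j) (qjoint p g False i + qjoint p g False j)
    \<le> 64 / (real M * (real M - 1)^2)"
proof -
  define q0 where "q0 z = qjoint p g True z" for z
  define q1 where "q1 z = qjoint p g False z" for z
  define W where "W z = q0 z + q1 z" for z
  define t where "t = 2 / real M"
  have Mp: "real M > 0" using M by simp
  have q0n: "q0 z \<ge> 0" and q1n: "q1 z \<ge> 0" for z
    unfolding q0_def q1_def by (simp_all add: qjoint_nonneg[OF p])
  have Wn: "W z \<ge> 0" for z unfolding W_def using q0n q1n by (simp add: add_nonneg_nonneg)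
  have fin: "finite (range g)" by simp
  have W1: "(\<Sum>z\<in>range g. W z) = 1"
  proof -
    have "(\<Sum>z\<in>range g. W z) = marg_X p True + marg_X p False"
      unfolding W_def q0_def q1_def by (simp add: sum.distrib qjoint_sum)
    also have "\<dots> = 1" using p unfolding is_joint_pmf_def marg_X_def by (simp add: UNIV_bool)
    finally show ?thesis .
  qed
  define Sm where "Sm = {z\<in>range g. W z \<le> t}"
  define Bg where "Bg = range g - Sm"
  have Bg: "2 * card Bg < M"
  proof (cases "Bg = {}")
    case True then show ?thesis using M by simp
  next
    case False
    have fB: "finite Bg" unfolding Bg_def by simp
    have "(\<Sum>z\<in>Bg. t) < (\<Sum>z\<in>Bg. W z)"
      using False fB by (intro sum_strict_mono) (auto simp: Bg_def Sm_def)
    also have "\<dots> \<le> (\<Sum>z\<in>range g. W z)" using Wn by (intro sum_mono2) (auto simp: Bg_def)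
    finally have "real (card Bg) * t < 1" using W1 by simp
    then have "real (card Bg) * 2 < real M" using Mp unfolding t_def by (simp add: field_simps)
    then show ?thesis by linarith
  qed
  have cS: "card Sm = M - card Bg"
  proof -
    have "Sm = range g - Bg" "Bg \<subseteq> range g" unfolding Bg_def Sm_def by auto
    moreover have "finite Bg" unfolding Bg_def by simp
    ultimately show ?thesis using M by (simp add: card_Diff_subset)
  qed
  define m where "m = M div 2"
  have m1: "m \<ge> 1" using M unfolding m_def by simp
  have cSm: "card Sm \<ge> m + 1" using cS Bg unfolding m_def by linarith
  define th where "th z = ang (q0 z) (q1 z)" for z
  have rng: "\<forall>z\<in>Sm. 0 \<le> th z \<and> th z \<le> pi/2" unfolding th_def using ang_range q0n q1n by blast
  obtain i j where ij: "i \<in> Sm" "j \<in> Sm" "i \<noteq> j" "\<bar>th i - th j\<bar> \<le> (pi/2)/m"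
    using pigeon[of Sm m "pi/2" th] cSm m1 rng by (auto simp: Sm_def)
  have Wi: "q0 i + q1 i \<le> t" and Wj: "q0 j + q1 j \<le> t" using ij unfolding Sm_def W_def by auto
  have loss: "Tf (q0 i) (q1 i) + Tf (q0 j) (q1 j) - Tf (q0 i + q0 j) (q1 i + q1 j) \<le> 2*t*(th i - th j)^2"
    unfolding th_def by (rule merge_loss[OF q0n q1n q0n q1n Wi Wj])
  have sq: "(th i - th j)^2 \<le> ((pi/2)/m)^2"
    using ij(4) by (metis abs_ge_zero power2_abs power_mono)
  have t0: "t \<ge> 0" unfolding t_def by simp
  have mM: "2 * real m \<ge> real M - 1" unfolding m_def by linarith
  have mp: "real m > 0" using m1 by simp
  have "2*t*(th i - th j)^2 \<le> 2*t*((pi/2)/m)^2" using sq t0 by (intro mult_left_mono) auto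
  also have "\<dots> = pi^2 / (real M * real m^2)" unfolding t_def using Mp mp
    by (simp add: field_simps power2_eq_square)
  also have "\<dots> \<le> 16 / (real M * real m^2)"
  proof -
    have "pi^2 \<le> 4^2" using pi_less_4 pi_gt_zero by (intro power_mono) auto
    then show ?thesis using Mp mp by (intro divide_right_mono) auto
  qed
  also have "\<dots> = 64 / (real M * (2 * real m)^2)" by (simp add: power2_eq_square)
  also have "\<dots> \<le> 64 / (real M * (real M - 1)^2)"
  proof -
    have "(real M - 1)^2 \<le> (2 * real m)^2" using mM M by (intro power_mono) auto
    moreover have "(real M - 1)^2 > 0" using M by simp
    ultimately show ?thesis using Mp mp by (intro divide_left_mono mult_left_mono mult_pos_pos) auto
  qed
  finally show ?thesis using ij loss unfolding Sm_def q0_def q1_def by force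
qed



lemma run_card: "greedy_run p L g h \<Longrightarrow> card (range h) \<le> L"
  by (induction rule: greedy_run.induct) auto

lemma run_bound:
  fixes p :: "bool \<Rightarrow> 'y::finite \<Rightarrow> real"
  assumes "greedy_run p L g h" "is_joint_pmf p" "pinv g" "L \<ge> 1"
  shows "mutual_info p g - mutual_info p h \<le> 64 / (real L)^2 - 64 / (real (max L (card (range g))))^2"
  using assms
proof (induction rule: greedy_run.induct)
  case (stop g)
  then have "max L (card (range g)) = L" by simp
  then show ?case by simp
next
  case (step g g' h)
  define M where "M = card (range g)"
  have M2: "M \<ge> 2" using step M_def by linarith
  obtain i j where ij: "i \<in> range g" "j \<in> range g" "i \<noteq> j" "g' = merge g i j"
    and minl: "\<forall>i' j'. i' \<in> range g \<and> j' \<in> range g \<and> i' \<noteq> j' \<longrightarrow>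
           mutual_info p g - mutual_info p (merge g i j)
             \<le> mutual_info p g - mutual_info p (merge g i' j')"
    using step(2) unfolding greedy_step_def by blast
  obtain i' j' where ij': "i' \<in> range g" "j' \<in> range g" "i' \<noteq> j'"
    and gl: "Tf (qjoint p g True i') (qjoint p g False i') + Tf (qjoint p g True j') (qjoint p g False j')
    - Tf (qjoint p g True i' + qjoint p g True j') (qjoint p g False i' + qjoint p g False j')
    \<le> 64 / (real M * (real M - 1)^2)"
    using good_pair[OF step(5) M_def[symmetric] M2] by blast
  have d1: "mutual_info p g - mutual_info p g' \<le> 64 / (real M * (real M - 1)^2)"
    using minl[rule_format, of i' j'] ij' ij(4) MI_merge[OF step(5,6) ij'] gl by simp
  have pg': "pinv g'" using pinv_merge[OF step(6) ij(1,2)] ij(4) by simp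
  have cg': "card (range g') = M - 1" using card_merge[OF step(6) ij(1-3)] ij(4) M_def by simp
  have mx: "max L (card (range g')) = M - 1" using cg' step(1) M_def by simp
  have mx2: "max L (card (range g)) = M" using step(1) M_def by simp
  have IH: "mutual_info p g' - mutual_info p h \<le> 64 / (real L)^2 - 64 / (real M - 1)^2"
    using step.IH[OF step(5) pg' step(7)] mx M2 by (simp add: of_nat_diff)
  show ?case unfolding mx2 using d1 IH step_arith[OF M2] by linarith
qed

lemma run_exists:
  fixes p :: "bool \<Rightarrow> 'y::finite \<Rightarrow> real"
  assumes "pinv g" "L \<ge> 1"
  shows "\<exists>h. greedy_run p L g h"
  using assms
proof (induction "card (range g)" arbitrary: g rule: less_induct)
  case less
  show ?case
  proof (cases "card (range g) \<le> L")
    case True then show ?thesis using greedy_run.stop by blast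
  next
    case False
    obtain i where i: "i \<in> range g" by auto
    have "range g \<noteq> {i}" using False less.prems(2) by auto
    then obtain j where j: "j \<in> range g" "j \<noteq> i" using i by blast
    define P where "P = {(a, b). a \<in> range g \<and> b \<in> range g \<and> a \<noteq> b}"
    define f where "f = (\<lambda>(a, b). mutual_info p g - mutual_info p (merge g a b))"
    have finP: "finite P" unfolding P_def
      by (rule finite_subset[of _ "range g \<times> range g"]) auto
    have neP: "P \<noteq> {}" using i j unfolding P_def by auto
    have "Min (f ` P) \<in> f ` P" using finP neP by simp
    then obtain ab where ab: "ab \<in> P" "f ab = Min (f ` P)" by auto
    obtain a b where abe: "ab = (a, b)" by (cases ab)
    have abr: "a \<in> range g" "b \<in> range g" "a \<noteq> b" using ab abe unfolding P_def by auto
    have "greedy_step p g (merge g a b)"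
      unfolding greedy_step_def
    proof (intro exI conjI allI impI)
      show "a \<in> range g" "b \<in> range g" "a \<noteq> b" using abr by auto
      show "merge g a b = merge g a b" ..
      fix i' j' assume "i' \<in> range g \<and> j' \<in> range g \<and> i' \<noteq> j'"
      then have "(i', j') \<in> P" unfolding P_def by auto
      then have "Min (f ` P) \<le> f (i', j')" using finP by simp
      then show "mutual_info p g - mutual_info p (merge g a b) \<le> mutual_info p g - mutual_info p (merge g i' j')"
        using ab abe unfolding f_def by simp
    qed
    moreover have "pinv (merge g a b)" using pinv_merge[OF less.prems(1) abr(1,2)] .
    moreover have "card (range (merge g a b)) < card (range g)"
      using card_merge[OF less.prems(1) abr] False less.prems(2) by simp
    ultimately obtain h where "greedy_run p L (merge g a b) h"
      using less.hyps less.prems(2) by blast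
    then show ?thesis using greedy_run.step False \<open>greedy_step p g (merge g a b)\<close> by (meson not_le)
  qed
qed

theorem theorem6:
  fixes p :: "bool \<Rightarrow> 'y::finite \<Rightarrow> real" and L :: nat
  assumes "is_joint_pmf p" and "L \<ge> 1"
  shows "(\<exists>h. greedy_run p L (\<lambda>y. {y}) h) \<and>
         (\<forall>h. greedy_run p L (\<lambda>y. {y}) h \<longrightarrow>
            (\<exists>\<sigma> :: 'y set \<Rightarrow> nat. inj_on \<sigma> (range h) \<and> \<sigma> ` range h \<subseteq> {1..L} \<and>
               mutual_info p (\<lambda>y. y) - mutual_info p (\<sigma> \<circ> h) \<le> 64 / (real L)^2))"
proof (intro conjI allI impI)
  show "\<exists>h. greedy_run p L (\<lambda>y. {y}) h" using run_exists[OF pinv_single assms(2)] .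
next
  fix h assume run: "greedy_run p L (\<lambda>y. {y}) h"
  have cL: "card (range h) \<le> L" using run_card[OF run] .
  obtain f and n :: nat where fn: "f ` range h = {i. i < n}" "inj_on f (range h)"
    using finite_imp_inj_to_nat_seg[of "range h"] by auto
  have n: "n = card (range h)"
    using fn card_image[OF fn(2)] by simp
  define s where "s z = Suc (f z)" for z
  have inj: "inj_on s (range h)" using fn(2) unfolding s_def inj_on_def by auto
  have sub: "s ` range h \<subseteq> {1..L}"
  proof
    fix u assume "u \<in> s ` range h"
    then obtain z where z: "z \<in> range h" "u = Suc (f z)" unfolding s_def by auto
    have "f z < n" using fn(1) z(1) by auto
    then show "u \<in> {1..L}" using z n cL by auto
  qed
  have e1: "mutual_info p (s \<circ> h) = mutual_info p h" by (rule relabel[OF inj])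
  have e2: "mutual_info p ((\<lambda>y. {y}) \<circ> (\<lambda>y::'y. y)) = mutual_info p (\<lambda>y::'y. y)"
    by (rule relabel) (auto simp: inj_on_def)
  have e3: "(\<lambda>y. {y}) \<circ> (\<lambda>y::'y. y) = (\<lambda>y. {y})" by auto
  have b: "mutual_info p (\<lambda>y. {y}) - mutual_info p h
     \<le> 64 / (real L)^2 - 64 / (real (max L (card (range (\<lambda>y::'y. {y})))))^2"
    by (rule run_bound[OF run assms(1) pinv_single assms(2)])
  have "mutual_info p (\<lambda>y. y) - mutual_info p (s \<circ> h) \<le> 64 / (real L)^2"
  proof -
    have "64 / (real (max L (card (range (\<lambda>y::'y. {y})))))^2 \<ge> 0" by simp
    moreover have "mutual_info p (\<lambda>y. {y}) = mutual_info p (\<lambda>y::'y. y)" using e2 e3 by simp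
    ultimately show ?thesis using b e1 by linarith
  qed
  then show "\<exists>\<sigma> :: 'y set \<Rightarrow> nat. inj_on \<sigma> (range h) \<and> \<sigma> ` range h \<subseteq> {1..L} \<and>
               mutual_info p (\<lambda>y. y) - mutual_info p (\<sigma> \<circ> h) \<le> 64 / (real L)^2"
    using inj sub by blast
qed

end
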